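(* Let $A\in\mathbb{R}^{n\times m}$ have distinct columns with $a_1=0$, suppose the extreme points of $\mathrm{New}(A)$ are affinely independent, and let $c\in\mathbb{R}^m$ satisfy $c_i\le 0$ for every nonzero nonextremal $a_i$. Let $f=\mathrm{Sig}(A,c)$. Then either $f_{\mathsf{SAGE}}=f^\star$, or $f_{\mathsf{SAGE}}<f^\star<c_1$.
   Context: Let $A\in\mathbb{R}^{n\times m}$ have distinct columns $a_1,\dots,a_m$. For $c\in\mathbb{R}^m$, $\mathrm{Sig}(A,c)$ denotes the function $x\mapsto\sum_{i=1}^m c_i\exp(a_i^\top x)$ on $\mathbb{R}^n$. $\mathrm{New}(A)=\mathrm{conv}\{a_1,\dots,a_m\}$; $a_i$ is extremal if it is an extreme point of $\mathrm{New}(A)$ and nonextremal otherwise. $C_{\mathrm{NNS}}(A)=\{c:\mathrm{Sig}(A,c)(x)\ge 0\ \forall x\}$, $C_{\mathrm{AGE}}(A,k)=\{c\in C_{\mathrm{NNS}}(A): c_i\ge 0\ \forall i\ne k\}$, $C_{\mathrm{SAGE}}(A)=\sum_{k=1}^m C_{\mathrm{AGE}}(A,k)$. For $f=\mathrm{Sig}(A,c)$ with $a_1=0$: $f^\star=\inf_{x\in\mathbb{R}^n}f(x)$ and $f_{\mathsf{SAGE}}=\sup\{\gamma\in\mathbb{R}: c-\gamma e_1\in C_{\mathrm{SAGE}}(A)\}$ (with $\sup\emptyset=-\infty$). *)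

theory Defs
  imports "HOL-Analysis.Analysis" "HOL-Library.Extended_Real"
begin

text \<open>Exponent matrix A is given by its columns: A :: 'm \<Rightarrow> real^'n, with the
  finite type 'm indexing the columns 1..m. A coefficient vector is c :: 'm \<Rightarrow> real.\<close>

definition Sig :: "('m::finite \<Rightarrow> real^'n) \<Rightarrow> ('m \<Rightarrow> real) \<Rightarrow> real^'n \<Rightarrow> real" where
  "Sig A c x = (\<Sum>i\<in>UNIV. c i * exp (A i \<bullet> x))"

definition New :: "('m::finite \<Rightarrow> real^'n) \<Rightarrow> (real^'n) set" where
  "New A = convex hull (range A)"

definition extremal :: "('m::finite \<Rightarrow> real^'n) \<Rightarrow> 'm \<Rightarrow> bool" where
  "extremal A i \<longleftrightarrow> A i extreme_point_of New A"

definition C_NNS :: "('m::finite \<Rightarrow> real^'n) \<Rightarrow> ('m \<Rightarrow> real) set" where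
  "C_NNS A = {c. \<forall>x. Sig A c x \<ge> 0}"

definition C_AGE :: "('m::finite \<Rightarrow> real^'n) \<Rightarrow> 'm \<Rightarrow> ('m \<Rightarrow> real) set" where
  "C_AGE A k = {c \<in> C_NNS A. \<forall>i. i \<noteq> k \<longrightarrow> c i \<ge> 0}"

definition C_SAGE :: "('m::finite \<Rightarrow> real^'n) \<Rightarrow> ('m \<Rightarrow> real) set" where
  "C_SAGE A = {c. \<exists>g :: 'm \<Rightarrow> 'm \<Rightarrow> real. (\<forall>k. g k \<in> C_AGE A k) \<and> (\<forall>i. c i = (\<Sum>k\<in>UNIV. g k i))}"

definition f_star :: "('m::finite \<Rightarrow> real^'n) \<Rightarrow> ('m \<Rightarrow> real) \<Rightarrow> ereal" where
  "f_star A c = (INF x. ereal (Sig A c x))"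

text \<open>f_SAGE with distinguished index i1 (the column a_1 = 0); sup of empty set is -\<infinity>.\<close>
definition f_SAGE :: "('m::finite \<Rightarrow> real^'n) \<Rightarrow> 'm \<Rightarrow> ('m \<Rightarrow> real) \<Rightarrow> ereal" where
  "f_SAGE A i1 c = Sup {ereal \<gamma> | \<gamma>. (\<lambda>i. c i - \<gamma> * (if i = i1 then 1 else 0)) \<in> C_SAGE A}"

end

theory Submission
  imports Defs
begin

lemma solve_lin:
  fixes A :: "'m \<Rightarrow> real^'n" and s :: "'m \<Rightarrow> real"
  assumes inj: "inj_on A E" and ind: "\<not> affine_dependent (A ` E)" and j0: "j0 \<in> E"
  shows "\<exists>x t. \<forall>j\<in>E. A j \<bullet> x = s j + t"
proof -
  define B where "B = (\<lambda>y. - A j0 + y) ` (A ` (E - {j0}))"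
  have nin: "A j0 \<notin> A ` (E - {j0})" using inj j0 by (auto simp: inj_on_def)
  have ins: "insert (A j0) (A ` (E - {j0})) = A ` E" using j0 by auto
  have "\<not> dependent B" using ind affine_dependent_iff_dependent[OF nin] unfolding B_def ins by simp
  then obtain g where g: "linear g" "\<forall>y\<in>B. g y = s (inv_into E A (y + A j0)) - s j0"
    using real_vector.linear_independent_extend[of B "\<lambda>y. s (inv_into E A (y + A j0)) - s j0"] by auto
  define x where "x = adjoint g 1"
  have gx: "\<And>y. y \<bullet> x = g y" unfolding x_def using adjoint_works[OF g(1)] by simp
  show ?thesis
  proof (intro exI ballI)
    fix j assume j: "j \<in> E"
    show "A j \<bullet> x = s j + (A j0 \<bullet> x - s j0)"
    proof (cases "j = j0")
      case True then show ?thesis by simp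
    next
      case False
      have "- A j0 + A j \<in> B" unfolding B_def using j False by auto
      then have "g (- A j0 + A j) = s j - s j0" using g(2) inv_into_f_f[OF inj j] by simp
      then have "(- A j0 + A j) \<bullet> x = s j - s j0" using gx by simp
      then show ?thesis by (simp add: inner_diff_left algebra_simps)
    qed
  qed
qed


definition Kf :: "'m set \<Rightarrow> ('m \<Rightarrow> 'm \<Rightarrow> real) \<Rightarrow> ('m \<Rightarrow> real) \<Rightarrow> ('m \<Rightarrow> real) \<Rightarrow> real" where
  "Kf E lam h s = (\<Sum>j\<in>E. h j * exp (s j)) + (\<Sum>i\<in>-E. h i * exp (\<Sum>j\<in>E. lam i j * s j))"

lemma sum_UNIV_split: "sum f (UNIV::'m::finite set) = sum f E + sum f (- E)"
proof -
  have "UNIV = E \<union> - E" by auto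
  then have "sum f UNIV = sum f (E \<union> - E)" by simp
  also have "\<dots> = sum f E + sum f (- E)" by (rule sum.union_disjoint) auto
  finally show ?thesis .
qed

lemma K_nonneg:
  fixes A :: "'m::finite \<Rightarrow> real^'n"
  assumes solve: "\<forall>s. \<exists>x t. \<forall>j\<in>E. A j \<bullet> x = s j + t"
    and repr: "\<forall>i. i \<notin> E \<longrightarrow> sum (lam i) E = 1 \<and> A i = (\<Sum>j\<in>E. lam i j *\<^sub>R A j)"
    and nns: "\<forall>x. 0 \<le> Sig A h x"
  shows "0 \<le> Kf E lam h s"
proof -
  obtain x t where xt: "\<forall>j\<in>E. A j \<bullet> x = s j + t" using solve by blast
  have e1: "(\<Sum>j\<in>E. h j * exp (A j \<bullet> x)) = exp t * (\<Sum>j\<in>E. h j * exp (s j))"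
    by (simp add: sum_distrib_left xt exp_add algebra_simps)
  have e2: "A i \<bullet> x = (\<Sum>j\<in>E. lam i j * s j) + t" if "i \<notin> E" for i
  proof -
    have "A i \<bullet> x = (\<Sum>j\<in>E. lam i j * (A j \<bullet> x))" using repr that by (simp add: inner_sum_left)
    also have "\<dots> = (\<Sum>j\<in>E. lam i j * s j) + (\<Sum>j\<in>E. lam i j) * t"
      using xt by (simp add: algebra_simps sum.distrib sum_distrib_left)
    finally show ?thesis using repr that by simp
  qed
  have e3: "(\<Sum>i\<in>-E. h i * exp (A i \<bullet> x)) = exp t * (\<Sum>i\<in>-E. h i * exp (\<Sum>j\<in>E. lam i j * s j))"
    by (simp add: sum_distrib_left e2 exp_add algebra_simps)
  have "Sig A h x = exp t * Kf E lam h s"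
    unfolding Sig_def Kf_def using sum_UNIV_split[of "\<lambda>i. h i * exp (A i \<bullet> x)" E] e1 e3
    by (simp add: algebra_simps)
  then have "0 \<le> exp t * Kf E lam h s" using nns by metis
  then show ?thesis by (simp add: zero_le_mult_iff)
qed

lemma amgm:
  fixes l y :: "'a \<Rightarrow> real"
  assumes "finite E" "E \<noteq> {}" "\<forall>j\<in>E. 0 \<le> l j" "sum l E = 1"
  shows "exp (\<Sum>j\<in>E. l j * y j) \<le> (\<Sum>j\<in>E. l j * exp (y j))"
  using convex_on_sum[OF assms(1,2) exp_convex, of l y] assms by simp

lemma exp_bound:
  fixes \<epsilon> t M :: real
  assumes "\<epsilon> > 0" "\<epsilon> * exp t - t \<le> M"
  shows "\<bar>t\<bar> \<le> \<bar>M\<bar> + 2 * (\<bar>M\<bar> + 1) / \<epsilon> + 1"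
proof -
  have "t \<ge> - \<bar>M\<bar>" using assms by (smt (verit) exp_gt_zero mult_pos_pos)
  moreover have "t \<le> 2 * (\<bar>M\<bar> + 1) / \<epsilon> + 1"
  proof (rule ccontr)
    assume "\<not> ?thesis"
    then have t: "t > 2 * (\<bar>M\<bar> + 1) / \<epsilon> + 1" by simp
    have t1: "t \<ge> 1" using t assms(1) by (smt (verit) divide_nonneg_pos)
    have "exp t \<ge> t^2 / 2" using exp_lower_Taylor_quadratic[of t] t1 by (smt (verit) zero_le_power2)
    then have "\<epsilon> * exp t \<ge> \<epsilon> * t^2/2" using assms(1) by (smt (verit) mult_left_mono times_divide_eq_right)
    moreover have "\<epsilon> * t > 2 * (\<bar>M\<bar> + 1)" using t assms(1)
      by (smt (verit, ccfv_SIG) divide_less_eq mult.commute)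
    then have "\<epsilon> * t^2/2 > (\<bar>M\<bar> + 1) * t" using t1 by (simp add: power2_eq_square)
    ultimately have "\<epsilon> * exp t - t > \<bar>M\<bar> * t" by (simp add: algebra_simps)
    moreover have "\<bar>M\<bar> * t \<ge> \<bar>M\<bar>" using t1 by (simp add: mult_le_cancel_left1)
    ultimately show False using assms(2) by linarith
  qed
  moreover have "2 * (\<bar>M\<bar> + 1) / \<epsilon> \<ge> 0" using assms(1) by simp
  ultimately show ?thesis by linarith
qed



definition Phi :: "'m set \<Rightarrow> ('m \<Rightarrow> 'm \<Rightarrow> real) \<Rightarrow> ('m \<Rightarrow> real) \<Rightarrow> real \<Rightarrow> ('m \<Rightarrow> real) \<Rightarrow> real" where
  "Phi E lam h \<epsilon> s = Kf E lam h s + \<epsilon> * (\<Sum>j\<in>E. exp (s j)) - (\<Sum>j\<in>E. s j)"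

lemma if0_simps:
  "(a::real) * (if P then b else 0) = (if P then a * b else 0)"
  "(if P then b else 0) * (a::real) = (if P then b * a else 0)"
  by auto

lemma Phi_grad:
  fixes E :: "'m::finite set"
  assumes min: "\<forall>s'. Phi E lam h \<epsilon> s \<le> Phi E lam h \<epsilon> s'" and j: "j \<in> E"
  shows "(h j + \<epsilon>) * exp (s j) + (\<Sum>i\<in>-E. h i * lam i j * exp (\<Sum>k\<in>E. lam i k * s k)) = 1"
proof -
  define e where "e k = (if k = j then 1 else (0::real))" for k
  define D where "D = (h j + \<epsilon>) * exp (s j) + (\<Sum>i\<in>-E. h i * lam i j * exp (\<Sum>k\<in>E. lam i k * s k)) - 1"
  have der: "((\<lambda>t. Phi E lam h \<epsilon> (\<lambda>k. s k + t * e k)) has_field_derivative D) (at 0)"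
    unfolding Phi_def Kf_def
    apply (rule derivative_eq_intros refl)+
    apply (simp add: D_def e_def if0_simps j)
    apply (simp add: ac_simps distrib_left)
    done
  have mn: "\<forall>y. \<bar>0 - y\<bar> < 1 \<longrightarrow> (\<lambda>t. Phi E lam h \<epsilon> (\<lambda>k. s k + t * e k)) 0 \<le> (\<lambda>t. Phi E lam h \<epsilon> (\<lambda>k. s k + t * e k)) y"
    using min by simp
  have "D = 0" using DERIV_local_min[OF der zero_less_one mn] .
  then show ?thesis unfolding D_def by simp
qed
lemma Phi_local:
  "(\<And>k. k \<in> E \<Longrightarrow> s k = s' k) \<Longrightarrow> Phi E lam h \<epsilon> s = Phi E lam h \<epsilon> s'"
  unfolding Phi_def Kf_def by (auto intro!: sum.cong arg_cong2[where f="(+)"] arg_cong[where f=exp])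

lemma Phi_lower:
  fixes E :: "'m::finite set"
  assumes Knn: "\<forall>s. 0 \<le> Kf E lam h s" and ep: "\<epsilon> > 0" and k: "k \<in> E"
  shows "\<epsilon> * exp (s k) - s k \<le> Phi E lam h \<epsilon> s - real (card E) * (1 + ln \<epsilon>) + (1 + ln \<epsilon>)"
proof -
  let ?m = "1 + ln \<epsilon>"
  have tm: "\<epsilon> * exp t - t - ?m \<ge> 0" for t
  proof -
    have "exp (t + ln \<epsilon>) \<ge> 1 + (t + ln \<epsilon>)" by (rule exp_ge_add_one_self)
    then show ?thesis using ep by (simp add: exp_add mult.commute)
  qed
  have "\<epsilon> * exp (s k) - s k - ?m \<le> (\<Sum>j\<in>E. \<epsilon> * exp (s j) - s j - ?m)"
    by (rule member_le_sum) (use tm k in auto)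
  also have "\<dots> = \<epsilon> * (\<Sum>j\<in>E. exp (s j)) - (\<Sum>j\<in>E. s j) - real (card E) * ?m"
    by (simp add: sum_subtractf sum_distrib_left)
  also have "\<dots> \<le> Phi E lam h \<epsilon> s - real (card E) * ?m"
    using Knn unfolding Phi_def by (smt (verit))
  finally show ?thesis by simp
qed

lemma Phi_min:
  fixes E :: "'m::finite set"
  assumes Knn: "\<forall>s. 0 \<le> Kf E lam h s" and ep: "\<epsilon> > 0"
  shows "\<exists>s. \<forall>s'. Phi E lam h \<epsilon> s \<le> Phi E lam h \<epsilon> s'"
proof -
  define P where "P v = Phi E lam h \<epsilon> (\<lambda>k. v $ k)" for v :: "real^'m"
  define S where "S = {v. P v \<le> P 0 \<and> (\<forall>k. k \<notin> E \<longrightarrow> v $ k = 0)}"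
  have cont: "continuous_on UNIV P"
    unfolding P_def Phi_def Kf_def by (intro continuous_intros)
  have "closed {v. P v \<le> P 0}"
    using closed_Collect_le[OF cont continuous_on_const] .
  moreover have "closed {v::real^'m. \<forall>k. k \<notin> E \<longrightarrow> v $ k = 0}"
    by (rule closed_substandard_cart)
  ultimately have cl: "closed S" unfolding S_def by (simp add: Collect_conj_eq closed_Int)
  define M where "M = P 0 - real (card E) * (1 + ln \<epsilon>) + (1 + ln \<epsilon>)"
  define B where "B = \<bar>M\<bar> + 2 * (\<bar>M\<bar> + 1) / \<epsilon> + 1"
  have B0: "B \<ge> 0" unfolding B_def using ep by simp
  have comp: "\<bar>v $ k\<bar> \<le> B" if "v \<in> S" for v k
  proof (cases "k \<in> E")
    case True
    have "\<epsilon> * exp (v $ k) - v $ k \<le> M"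
      using Phi_lower[OF Knn ep True, of "\<lambda>k. v $ k"] that unfolding S_def M_def P_def by simp
    then show ?thesis unfolding B_def by (rule exp_bound[OF ep])
  next
    case False then show ?thesis using that B0 unfolding S_def by simp
  qed
  have "bounded S"
  proof (rule boundedI)
    fix v assume "v \<in> S"
    have "norm v \<le> (\<Sum>k\<in>UNIV. \<bar>v $ k\<bar>)" by (rule norm_le_l1_cart)
    also have "\<dots> \<le> (\<Sum>k\<in>(UNIV::'m set). B)" by (rule sum_mono) (use comp \<open>v \<in> S\<close> in auto)
    finally show "norm v \<le> real CARD('m) * B" by simp
  qed
  then have c1: "compact S" using cl by (simp add: compact_eq_bounded_closed)
  have c2: "S \<noteq> {}" unfolding S_def by auto
  have c3: "continuous_on S P" using cont by (rule continuous_on_subset) simp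
  obtain v where v: "v \<in> S" "\<And>w. w \<in> S \<Longrightarrow> P v \<le> P w"
    using continuous_attains_inf[OF c1 c2 c3] by blast
  show ?thesis
  proof (intro exI allI)
    fix s' :: "'m \<Rightarrow> real"
    define w where "w = (\<chi> k. if k \<in> E then s' k else 0)"
    have Pw: "P w = Phi E lam h \<epsilon> s'" unfolding P_def w_def by (rule Phi_local) simp
    show "Phi E lam h \<epsilon> (\<lambda>k. v $ k) \<le> Phi E lam h \<epsilon> s'"
    proof (cases "P w \<le> P 0")
      case True
      then have "w \<in> S" unfolding S_def w_def by simp
      then show ?thesis using v Pw unfolding P_def by metis
    next
      case False
      then show ?thesis using v(1) Pw unfolding S_def P_def by auto
    qed
  qed
qed



lemma approx_dec:
  fixes A :: "'m::finite \<Rightarrow> real^'n"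
  assumes Knn: "\<forall>s. 0 \<le> Kf E lam h s" and ep: "\<epsilon> > 0" and Ene: "E \<noteq> {}"
    and repr: "\<forall>i. i \<notin> E \<longrightarrow> (\<forall>j\<in>E. 0 \<le> lam i j) \<and> sum (lam i) E = 1 \<and> A i = (\<Sum>j\<in>E. lam i j *\<^sub>R A j)"
    and neg: "\<forall>i. i \<notin> E \<longrightarrow> h i \<le> 0"
  shows "\<exists>V. (\<forall>i j. 0 \<le> V i j) \<and> (\<forall>j\<in>E. (\<Sum>i\<in>-E. V i j) \<le> h j + \<epsilon>) \<and>
     (\<forall>i x. i \<notin> E \<longrightarrow> 0 \<le> (\<Sum>j\<in>E. V i j * exp (A j \<bullet> x)) + h i * exp (A i \<bullet> x))"
proof -
  obtain s where smin: "\<forall>s'. Phi E lam h \<epsilon> s \<le> Phi E lam h \<epsilon> s'" using Phi_min[OF Knn ep] by blast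
  define L where "L i = (\<Sum>k\<in>E. lam i k * s k)" for i
  define V where "V i j = (if i \<notin> E \<and> j \<in> E then - h i * lam i j * exp (L i - s j) else 0)" for i j
  show ?thesis
  proof (intro exI conjI allI ballI impI)
    fix i j show "0 \<le> V i j"
    proof (cases "i \<notin> E \<and> j \<in> E")
      case True
      then have "- h i \<ge> 0" "0 \<le> lam i j" using repr neg by auto
      then have "0 \<le> - h i * lam i j * exp (L i - s j)" by (intro mult_nonneg_nonneg) auto
      then show ?thesis unfolding V_def using True by simp
    qed (auto simp add: V_def)
  next
    fix j assume j: "j \<in> E"
    have g: "(h j + \<epsilon>) * exp (s j) + (\<Sum>i\<in>-E. h i * lam i j * exp (L i)) = 1"
      using Phi_grad[OF smin j] unfolding L_def .
    have "(\<Sum>i\<in>-E. V i j) = (\<Sum>i\<in>-E. - h i * lam i j * exp (L i) * exp (- s j))"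
      unfolding V_def using j by (intro sum.cong) (auto simp: exp_diff exp_minus field_simps)
    also have "\<dots> = - (\<Sum>i\<in>-E. h i * lam i j * exp (L i)) * exp (- s j)"
      by (simp add: sum_distrib_right sum_negf)
    also have "\<dots> = ((h j + \<epsilon>) * exp (s j) - 1) * exp (- s j)"
    proof -
      have "(\<Sum>i\<in>-E. h i * lam i j * exp (L i)) = 1 - (h j + \<epsilon>) * exp (s j)" using g by linarith
      then show ?thesis by simp
    qed
    also have "\<dots> = h j + \<epsilon> - exp (- s j)" by (simp add: algebra_simps exp_minus)
    finally show "(\<Sum>i\<in>-E. V i j) \<le> h j + \<epsilon>" by simp
  next
    fix i x assume i: "i \<notin> E"
    have l0: "\<forall>j\<in>E. 0 \<le> lam i j" and l1: "sum (lam i) E = 1" and Ai: "A i = (\<Sum>j\<in>E. lam i j *\<^sub>R A j)"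
      using repr i by auto
    define y where "y j = L i - s j + A j \<bullet> x" for j
    have sy: "(\<Sum>j\<in>E. lam i j * y j) = A i \<bullet> x"
    proof -
      have "(\<Sum>j\<in>E. lam i j * y j) = (\<Sum>j\<in>E. lam i j) * L i - (\<Sum>j\<in>E. lam i j * s j) + (\<Sum>j\<in>E. lam i j * (A j \<bullet> x))"
        unfolding y_def by (simp add: algebra_simps sum.distrib sum_subtractf sum_distrib_left sum_distrib_right)
      also have "\<dots> = (\<Sum>j\<in>E. lam i j) * L i - L i + (\<Sum>j\<in>E. lam i j * (A j \<bullet> x))"
        unfolding L_def ..
      also have "\<dots> = A i \<bullet> x" using l1 Ai by (simp add: inner_sum_left)
      finally show ?thesis .
    qed
    have am: "exp (A i \<bullet> x) \<le> (\<Sum>j\<in>E. lam i j * exp (y j))"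
      using amgm[OF _ Ene l0 l1, of y] sy by simp
    have "(\<Sum>j\<in>E. V i j * exp (A j \<bullet> x)) = - h i * (\<Sum>j\<in>E. lam i j * exp (y j))"
      unfolding V_def y_def using i by (auto simp: sum_distrib_left exp_add intro!: sum.cong)
    moreover have "- h i * exp (A i \<bullet> x) \<le> - h i * (\<Sum>j\<in>E. lam i j * exp (y j))"
      using am neg i by (intro mult_left_mono) auto
    ultimately show "0 \<le> (\<Sum>j\<in>E. V i j * exp (A j \<bullet> x)) + h i * exp (A i \<bullet> x)" by simp
  qed
qed



lemma main_sage:
  fixes A :: "'m::finite \<Rightarrow> real^'n"
  assumes solve: "\<forall>s. \<exists>x t. \<forall>j\<in>E. A j \<bullet> x = s j + t" and Ene: "E \<noteq> {}"
    and repr: "\<forall>i. i \<notin> E \<longrightarrow> (\<forall>j\<in>E. 0 \<le> lam i j) \<and> sum (lam i) E = 1 \<and> A i = (\<Sum>j\<in>E. lam i j *\<^sub>R A j)"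
    and neg: "\<forall>i. i \<notin> E \<longrightarrow> h i \<le> 0"
    and nns: "\<forall>x. 0 \<le> Sig A h x"
  shows "h \<in> C_SAGE A"
proof -
  have Knn: "\<forall>s. 0 \<le> Kf E lam h s"
    using K_nonneg[OF solve _ nns] repr by blast
  define P where "P \<epsilon> V \<longleftrightarrow> (\<forall>i j. 0 \<le> V i j) \<and> (\<forall>j\<in>E. (\<Sum>i\<in>-E. V i j) \<le> h j + \<epsilon>) \<and>
     (\<forall>i x. i \<notin> E \<longrightarrow> 0 \<le> (\<Sum>j\<in>E. V i j * exp (A j \<bullet> x)) + h i * exp (A i \<bullet> x))" for \<epsilon> and V :: "'m \<Rightarrow> 'm \<Rightarrow> real"
  define ep where "ep k = inverse (real (Suc k))" for k
  have "\<forall>k. \<exists>V. P (ep k) V"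
  proof
    fix k
    have "ep k > 0" unfolding ep_def by simp
    from approx_dec[OF Knn this Ene repr neg] show "\<exists>V. P (ep k) V" unfolding P_def .
  qed
  then obtain Vs where Vs: "\<And>k. P (ep k) (Vs k)" by metis
  define W where "W k = (\<chi> p::'m\<times>'m. if fst p \<notin> E \<and> snd p \<in> E then Vs k (fst p) (snd p) else 0)" for k
  define C where "C = (\<Sum>j\<in>UNIV. \<bar>h j\<bar>) + 1"
  have Wb: "\<bar>W k $ p\<bar> \<le> C" for k p
  proof (cases "fst p \<notin> E \<and> snd p \<in> E")
    case True
    obtain i j where p: "p = (i, j)" by fastforce
    have i: "i \<notin> E" and j: "j \<in> E" using True p by auto
    have nn: "\<forall>i j. 0 \<le> Vs k i j" and sm: "(\<Sum>i\<in>-E. Vs k i j) \<le> h j + ep k" using Vs[of k] j unfolding P_def by auto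
    have "Vs k i j \<le> (\<Sum>i\<in>-E. Vs k i j)" by (rule member_le_sum) (use nn i in auto)
    moreover have "ep k \<le> 1" unfolding ep_def by (simp add: inverse_le_1_iff)
    moreover have "\<bar>h j\<bar> \<le> (\<Sum>j\<in>UNIV. \<bar>h j\<bar>)" by (rule member_le_sum) auto
    ultimately have "Vs k i j \<le> C" using sm unfolding C_def by linarith
    then show ?thesis unfolding W_def p using nn i j by simp
  next
    case False
    have "0 \<le> (\<Sum>j\<in>UNIV. \<bar>h j\<bar>)" by (rule sum_nonneg) auto
    then show ?thesis using False unfolding W_def C_def by auto
  qed
  have "bounded (range W)"
  proof (rule boundedI)
    fix v assume "v \<in> range W"
    then obtain k where v: "v = W k" by auto
    have "norm v \<le> (\<Sum>p\<in>UNIV. \<bar>v $ p\<bar>)" by (rule norm_le_l1_cart)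
    also have "\<dots> \<le> (\<Sum>p\<in>(UNIV::('m\<times>'m) set). C)" by (rule sum_mono) (use Wb v in auto)
    finally show "norm v \<le> real CARD('m\<times>'m) * C" by simp
  qed
  then obtain l r where r: "strict_mono r" and lim: "(W \<circ> r) \<longlonglongrightarrow> l"
    using bounded_imp_convergent_subsequence by blast
  define Vl where "Vl i j = l $ (i, j)" for i j
  have limc: "(\<lambda>k. Vs (r k) i j) \<longlonglongrightarrow> Vl i j" if "i \<notin> E" "j \<in> E" for i j
  proof -
    have "(\<lambda>k. (W \<circ> r) k $ (i, j)) \<longlonglongrightarrow> l $ (i, j)" by (rule tendsto_vec_nth[OF lim])
    then show ?thesis unfolding W_def Vl_def using that by simp
  qed
  have eplim: "(\<lambda>k. ep (r k)) \<longlonglongrightarrow> 0"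
    using LIMSEQ_subseq_LIMSEQ[OF LIMSEQ_inverse_real_of_nat r] unfolding ep_def comp_def .
  have Vl_nn: "0 \<le> Vl i j" if "i \<notin> E" "j \<in> E" for i j
    by (rule LIMSEQ_le_const[OF limc[OF that]]) (use Vs in \<open>auto simp: P_def\<close>)
  have Vl_sum: "(\<Sum>i\<in>-E. Vl i j) \<le> h j" if j: "j \<in> E" for j
  proof -
    have "(\<lambda>k. \<Sum>i\<in>-E. Vs (r k) i j) \<longlonglongrightarrow> (\<Sum>i\<in>-E. Vl i j)"
      by (intro tendsto_sum limc j) auto
    moreover have "(\<lambda>k. h j + ep (r k)) \<longlonglongrightarrow> h j + 0" by (intro tendsto_intros eplim)
    moreover have "\<forall>\<^sub>F k in sequentially. (\<Sum>i\<in>-E. Vs (r k) i j) \<le> h j + ep (r k)"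
      using Vs j unfolding P_def by auto
    ultimately show ?thesis by (simp add: tendsto_le[OF trivial_limit_sequentially])
  qed
  have Vl_piece: "0 \<le> (\<Sum>j\<in>E. Vl i j * exp (A j \<bullet> x)) + h i * exp (A i \<bullet> x)" if i: "i \<notin> E" for i x
  proof -
    have "(\<lambda>k. (\<Sum>j\<in>E. Vs (r k) i j * exp (A j \<bullet> x)) + h i * exp (A i \<bullet> x))
        \<longlonglongrightarrow> (\<Sum>j\<in>E. Vl i j * exp (A j \<bullet> x)) + h i * exp (A i \<bullet> x)"
      by (intro tendsto_intros limc i) auto
    then show ?thesis by (rule LIMSEQ_le_const) (use Vs i in \<open>auto simp: P_def\<close>)
  qed
  define g where "g k = (if k \<in> E then (\<lambda>i. if i = k then h k - (\<Sum>i'\<in>-E. Vl i' k) else 0)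
      else (\<lambda>i. if i = k then h k else if i \<in> E then Vl k i else 0))" for k
  have gAGE: "g k \<in> C_AGE A k" for k
  proof (cases "k \<in> E")
    case True
    have c0: "0 \<le> h k - (\<Sum>i'\<in>-E. Vl i' k)" using Vl_sum[OF True] by simp
    have "Sig A (g k) x = (h k - (\<Sum>i'\<in>-E. Vl i' k)) * exp (A k \<bullet> x)" for x
      unfolding Sig_def g_def using True by (simp add: if0_simps)
    then have "\<forall>x. 0 \<le> Sig A (g k) x" using c0 by simp
    moreover have "\<forall>i. i \<noteq> k \<longrightarrow> 0 \<le> g k i" unfolding g_def using True by simp
    ultimately show ?thesis unfolding C_AGE_def C_NNS_def by simp
  next
    case False
    have "Sig A (g k) x = (\<Sum>i\<in>UNIV. (if i = k then h k * exp (A i \<bullet> x) else 0) + (if i \<in> E then Vl k i * exp (A i \<bullet> x) else 0))" for x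
      unfolding Sig_def g_def using False by (intro sum.cong) auto
    also have "\<dots> x = h k * exp (A k \<bullet> x) + (\<Sum>i\<in>E. Vl k i * exp (A i \<bullet> x))" for x
      by (simp add: sum.distrib sum.inter_restrict[symmetric])
    finally have "\<forall>x. 0 \<le> Sig A (g k) x" using Vl_piece[OF False] by (simp add: add.commute)
    moreover have "\<forall>i. i \<noteq> k \<longrightarrow> 0 \<le> g k i" unfolding g_def using False Vl_nn by simp
    ultimately show ?thesis unfolding C_AGE_def C_NNS_def by simp
  qed
  have gsum: "h i = (\<Sum>k\<in>UNIV. g k i)" for i
  proof (cases "i \<in> E")
    case True
    have "(\<Sum>k\<in>UNIV. g k i) = (\<Sum>k\<in>UNIV. (if k = i then h i - (\<Sum>i'\<in>-E. Vl i' i) else 0) + (if k \<in> -E then Vl k i else 0))"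
      unfolding g_def using True by (intro sum.cong) auto
    also have "\<dots> = h i - (\<Sum>i'\<in>-E. Vl i' i) + (\<Sum>k\<in>-E. Vl k i)"
    proof -
      have aux: "(\<Sum>k\<in>UNIV. if k \<in> -E then Vl k i else 0) = (\<Sum>k\<in>-E. Vl k i)"
        using sum.inter_restrict[of "UNIV" "\<lambda>k. Vl k i" "-E"] by simp
      show ?thesis by (simp only: sum.distrib aux) simp
    qed
    finally show ?thesis by simp
  next
    case False
    have "(\<Sum>k\<in>UNIV. g k i) = (\<Sum>k\<in>UNIV. (if k = i then h i else 0))"
      unfolding g_def using False by (intro sum.cong) auto
    then show ?thesis by simp
  qed
  show ?thesis unfolding C_SAGE_def using gAGE gsum by blast
qed



lemma sage_nns: "c \<in> C_SAGE A \<Longrightarrow> 0 \<le> Sig A c x"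
proof -
  assume "c \<in> C_SAGE A"
  then obtain g where g: "\<forall>k. g k \<in> C_AGE A k" "\<forall>i. c i = (\<Sum>k\<in>UNIV. g k i)" unfolding C_SAGE_def by blast
  have "Sig A c x = (\<Sum>k\<in>UNIV. Sig A (g k) x)"
  proof -
    have "Sig A c x = (\<Sum>i\<in>UNIV. \<Sum>k\<in>UNIV. g k i * exp (A i \<bullet> x))"
      unfolding Sig_def using g(2) by (simp add: sum_distrib_right)
    also have "\<dots> = (\<Sum>k\<in>UNIV. \<Sum>i\<in>UNIV. g k i * exp (A i \<bullet> x))" by (rule sum.swap)
    finally show ?thesis unfolding Sig_def .
  qed
  also have "\<dots> \<ge> 0" using g(1) unfolding C_AGE_def C_NNS_def by (intro sum_nonneg) auto
  finally show ?thesis .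
qed

lemma sig_shift:
  assumes "A i1 = 0"
  shows "Sig A (\<lambda>i. c i - \<gamma> * (if i = i1 then 1 else 0)) x = Sig A c x - \<gamma>"
proof -
  have "Sig A (\<lambda>i. c i - \<gamma> * (if i = i1 then 1 else 0)) x
      = Sig A c x - (\<Sum>i\<in>UNIV. if i = i1 then \<gamma> * exp (A i \<bullet> x) else 0)"
    unfolding Sig_def by (simp add: algebra_simps sum_subtractf if0_simps)
  also have "\<dots> = Sig A c x - \<gamma>" using assms by simp
  finally show ?thesis .
qed

theorem mainTheorem12:
  fixes A :: "'m::finite \<Rightarrow> real^'n" and c :: "'m \<Rightarrow> real" and i1 :: 'm
  assumes "inj A"
    and "A i1 = 0"
    and "\<not> affine_dependent {A i | i. extremal A i}"
    and "\<And>i. A i \<noteq> 0 \<Longrightarrow> \<not> extremal A i \<Longrightarrow> c i \<le> 0"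
  shows "f_SAGE A i1 c = f_star A c \<or>
         (f_SAGE A i1 c < f_star A c \<and> f_star A c < ereal (c i1))"
proof -
  note injA = assms(1) and A1 = assms(2) and aff = assms(3) and cneg = assms(4)
  have le: "f_SAGE A i1 c \<le> f_star A c"
    unfolding f_SAGE_def f_star_def
  proof (rule Sup_least)
    fix y assume "y \<in> {ereal \<gamma> |\<gamma>. (\<lambda>i. c i - \<gamma> * (if i = i1 then 1 else 0)) \<in> C_SAGE A}"
    then obtain \<gamma> where y: "y = ereal \<gamma>" and m: "(\<lambda>i. c i - \<gamma> * (if i = i1 then 1 else 0)) \<in> C_SAGE A" by blast
    show "y \<le> (INF x. ereal (Sig A c x))"
    proof (rule INF_greatest)
      fix x
      have "0 \<le> Sig A c x - \<gamma>" using sage_nns[OF m, of x] sig_shift[of A i1, OF A1] by metis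
      then show "y \<le> ereal (Sig A c x)" using y by simp
    qed
  qed
  show ?thesis
  proof (cases "f_star A c < ereal (c i1)")
    case True
    then show ?thesis using le by auto
  next
    case False
    have up: "f_star A c \<le> ereal (Sig A c x)" for x unfolding f_star_def by (rule INF_lower) simp
    obtain F where F: "f_star A c = ereal F"
      using False up[of 0] by (cases "f_star A c") auto
    have Fle: "F \<le> Sig A c x" for x using up[of x] F by simp
    have cF: "c i1 \<le> F" using False F by simp
    define h where "h i = c i - F * (if i = i1 then 1 else 0)" for i
    define E where "E = {i. extremal A i}"
    define N where "N = New A"
    have Ndef: "N = convex hull (range A)" unfolding N_def New_def ..
    have compN: "compact N" and convN: "convex N" unfolding Ndef
      by (auto intro: finite_imp_compact_convex_hull)
    have KM: "N = convex hull {x. x extreme_point_of N}" by (rule Krein_Milman_Minkowski[OF compN convN])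
    have XE: "{x. x extreme_point_of N} = A ` E"
    proof
      show "{x. x extreme_point_of N} \<subseteq> A ` E"
      proof
        fix x assume "x \<in> {x. x extreme_point_of N}"
        then have x: "x extreme_point_of N" by simp
        then have "x \<in> range A" unfolding Ndef by (rule extreme_point_of_convex_hull)
        then obtain i where "x = A i" by auto
        then show "x \<in> A ` E" using x unfolding E_def extremal_def N_def by auto
      qed
    next
      show "A ` E \<subseteq> {x. x extreme_point_of N}" unfolding E_def extremal_def N_def by auto
    qed
    have KM': "N = convex hull (A ` E)" using KM XE by simp
    have A1N: "A i1 \<in> N" unfolding Ndef by (simp add: hull_inc)
    have Ene: "E \<noteq> {}" using A1N KM' by auto
    then obtain j0 where j0: "j0 \<in> E" by auto
    have injE: "inj_on A E" using injA by (simp add: inj_on_def inj_def)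
    have affE: "\<not> affine_dependent (A ` E)"
    proof -
      have "{A i |i. extremal A i} = A ` E" unfolding E_def by blast
      then show ?thesis using aff by simp
    qed
    have solve: "\<forall>s. \<exists>x t. \<forall>j\<in>E. A j \<bullet> x = s j + t"
      using solve_lin[OF injE affE j0] by blast
    have "\<forall>i. \<exists>l. i \<notin> E \<longrightarrow> (\<forall>j\<in>E. 0 \<le> l j) \<and> sum l E = 1 \<and> A i = (\<Sum>j\<in>E. l j *\<^sub>R A j)"
    proof
      fix i
      show "\<exists>l. i \<notin> E \<longrightarrow> (\<forall>j\<in>E. 0 \<le> l j) \<and> sum l E = 1 \<and> A i = (\<Sum>j\<in>E. l j *\<^sub>R A j)"
      proof -
        have "A i \<in> N" unfolding Ndef by (simp add: hull_inc)
        then have "A i \<in> convex hull (A ` E)" using KM' by simp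
        moreover have "convex hull (A ` E) = {y. \<exists>u. (\<forall>x\<in>A ` E. 0 \<le> u x) \<and> sum u (A ` E) = 1 \<and> (\<Sum>x\<in>A ` E. u x *\<^sub>R x) = y}"
          by (rule convex_hull_finite) simp
        ultimately have "\<exists>u. (\<forall>x\<in>A ` E. 0 \<le> u x) \<and> sum u (A ` E) = 1 \<and> (\<Sum>x\<in>A ` E. u x *\<^sub>R x) = A i"
          by (simp only: mem_Collect_eq)
        then obtain u where u: "\<forall>y\<in>A ` E. 0 \<le> u y" "sum u (A ` E) = 1" "(\<Sum>y\<in>A ` E. u y *\<^sub>R y) = A i"
          by blast
        have r1: "sum u (A ` E) = (\<Sum>j\<in>E. u (A j))" by (rule sum.reindex[OF injE, unfolded comp_def])
        have r2: "(\<Sum>y\<in>A ` E. u y *\<^sub>R y) = (\<Sum>j\<in>E. u (A j) *\<^sub>R A j)"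
          by (rule sum.reindex[OF injE, unfolded comp_def])
        have c1: "\<forall>j\<in>E. 0 \<le> u (A j)" using u(1) by blast
        have c2: "sum (\<lambda>j. u (A j)) E = 1" using u(2) r1 by simp
        have c3: "A i = (\<Sum>j\<in>E. u (A j) *\<^sub>R A j)" using u(3) r2 by simp
        show ?thesis
          apply (rule exI[of _ "\<lambda>j. u (A j)"])
          using c1 c2 c3 by blast
      qed
    qed
    from choice[OF this] obtain lam where repr: "\<forall>i. i \<notin> E \<longrightarrow> (\<forall>j\<in>E. 0 \<le> lam i j) \<and> sum (lam i) E = 1 \<and> A i = (\<Sum>j\<in>E. lam i j *\<^sub>R A j)"
      by blast
    have neg: "\<forall>i. i \<notin> E \<longrightarrow> h i \<le> 0"
    proof (intro allI impI)
      fix i assume i: "i \<notin> E"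
      show "h i \<le> 0"
      proof (cases "i = i1")
        case True then show ?thesis unfolding h_def using cF by simp
      next
        case False
        then have "A i \<noteq> A i1" using injA by (simp add: inj_eq)
        then have "A i \<noteq> 0" using A1 by simp
        then show ?thesis using cneg[of i] i False unfolding h_def E_def by simp
      qed
    qed
    have nns: "\<forall>x. 0 \<le> Sig A h x"
      using Fle sig_shift[of A i1 c F, OF A1] unfolding h_def by simp
    have "h \<in> C_SAGE A" by (rule main_sage[OF solve Ene repr neg nns])
    then have "ereal F \<le> f_SAGE A i1 c"
      unfolding f_SAGE_def h_def by (intro Sup_upper) blast
    then show ?thesis using le F by simp
  qed
qed

end
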